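(* Let $G$ be a nonabelian group, let $\psi\in\operatorname{End}(G)$ satisfy $\psi([G,G])\le Z(G)$, and let $\alpha,\beta\in\mathscr{E}$. Write $\psi_\alpha=\psi\circ\alpha:G\to G$. Then for all $g,h\in G$: (1) $\psi_\alpha(1_G)=1_G$; (2) $\psi_{\alpha+\beta}(g)\equiv\psi_{\beta+\alpha}(g)\pmod{Z(G)}$; (3) $\psi_\alpha(gh)\equiv\psi_\alpha(g)\psi_\alpha(h)\pmod{Z(G)}$; (4) $\psi_\alpha(g)^{-1}\equiv\psi_\alpha(g^{-1})\pmod{Z(G)}$; (5) $\psi_\alpha(gh)\psi_\alpha(g)^{-1}\equiv\psi_\alpha(h)\pmod{Z(G)}$.
   Context: $Z(G)$ is the center and $[G,G]$ the commutator subgroup of $G$. For $x,y\in G$, $x\equiv y\pmod{Z(G)}$ means $x=yz$ for some $z\in Z(G)$. $\mathscr{E}$ denotes the set of formal expressions $\alpha=n_1\phi_1+\cdots+n_t\phi_t$ with $t\ge 0$, $n_i\in\mathbb Z$, $\phi_i\in\operatorname{End}(G)$ (the free group generated by $\operatorname{End}(G)$, written additively, with sum $\alpha+\beta$ given by concatenation), acting on $G$ by $\alpha(g)=\phi_1(g^{n_1})\phi_2(g^{n_2})\cdots\phi_t(g^{n_t})$. (The order of terms matters, so $\alpha+\beta$ and $\beta+\alpha$ may act differently.) *)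

theory Defs
  imports "HOL-Algebra.Algebra"
begin

definition group_center :: "('a, 'b) monoid_scheme \<Rightarrow> 'a set" where
  "group_center G = {z \<in> carrier G. \<forall>x \<in> carrier G. z \<otimes>\<^bsub>G\<^esub> x = x \<otimes>\<^bsub>G\<^esub> z}"

definition cong_center :: "('a, 'b) monoid_scheme \<Rightarrow> 'a \<Rightarrow> 'a \<Rightarrow> bool" where
  "cong_center G x y \<longleftrightarrow> (\<exists>z \<in> group_center G. x = y \<otimes>\<^bsub>G\<^esub> z)"

text \<open>Formal expressions n_1 phi_1 + ... + n_t phi_t, represented as lists of
  pairs (n_i, phi_i) with each phi_i an endomorphism; the sum is list append.\<close>
definition formal_exprs :: "('a, 'b) monoid_scheme \<Rightarrow> (int \<times> ('a \<Rightarrow> 'a)) list set" where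
  "formal_exprs G = {\<alpha>. \<forall>p \<in> set \<alpha>. snd p \<in> hom G G}"

definition expr_act :: "('a, 'b) monoid_scheme \<Rightarrow> (int \<times> ('a \<Rightarrow> 'a)) list \<Rightarrow> 'a \<Rightarrow> 'a" where
  "expr_act G \<alpha> g = foldr (\<lambda>(n, \<phi>) acc. \<phi> (g [^]\<^bsub>G\<^esub> n) \<otimes>\<^bsub>G\<^esub> acc) \<alpha> \<one>\<^bsub>G\<^esub>"

end

theory Submission
  imports Defs
begin

lemma expr_act_append:
  "expr_act G (a @ b) g = expr_act G a g \<otimes>\<^bsub>G\<^esub> expr_act G b g"
  if "group G" "a \<in> formal_exprs G" "b \<in> formal_exprs G" "g \<in> carrier G"
proof -
  interpret group G by fact
  have c: "expr_act G b g \<in> carrier G"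
    using that(3)
  proof (induction b)
    case Nil then show ?case by (simp add: expr_act_def)
  next
    case (Cons p b)
    then show ?case using that(4)
      by (cases p) (auto simp: expr_act_def formal_exprs_def hom_def Pi_def)
  qed
  show ?thesis using that(2)
  proof (induction a)
    case Nil then show ?case using c by (simp add: expr_act_def)
  next
    case (Cons p a)
    have "expr_act G a g \<in> carrier G" using Cons.prems that(4)
    proof (induction a)
      case Nil then show ?case by (simp add: expr_act_def)
    next
      case (Cons q a)
      then show ?case
        by (cases q) (auto simp: expr_act_def formal_exprs_def hom_def Pi_def)
    qed
    then show ?case using Cons c that(4)
      by (cases p) (auto simp: expr_act_def formal_exprs_def hom_def Pi_def m_assoc)
  qed
qed

lemma expr_act_carrier:
  "expr_act G a g \<in> carrier G"
  if "group G" "a \<in> formal_exprs G" "g \<in> carrier G"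
  using that(2)
proof (induction a)
  case Nil then show ?case using that by (simp add: expr_act_def monoid.one_closed group.is_monoid)
next
  case (Cons q a)
  then show ?case using that
    by (cases q) (auto simp: expr_act_def formal_exprs_def hom_def Pi_def group.int_pow_closed monoid.m_closed group.is_monoid)
qed

lemma expr_act_one:
  "expr_act G a \<one>\<^bsub>G\<^esub> = \<one>\<^bsub>G\<^esub>"
  if "group G" "a \<in> formal_exprs G"
  using that(2)
proof (induction a)
  case Nil then show ?case by (simp add: expr_act_def)
next
  case (Cons q a)
  then show ?case using that
    by (cases q) (auto simp: expr_act_def formal_exprs_def group.int_pow_one
        hom_one group.is_monoid monoid.one_closed monoid.l_one)
qed

lemma expr_act_Cons [simp]:
  "expr_act G ((n, \<phi>) # a) g = \<phi> (g [^]\<^bsub>G\<^esub> n) \<otimes>\<^bsub>G\<^esub> expr_act G a g"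
  by (simp add: expr_act_def)

lemma expr_act_hom:
  "f (expr_act G a (g \<otimes>\<^bsub>G\<^esub> h)) = f (expr_act G a g) \<otimes>\<^bsub>Q\<^esub> f (expr_act G a h)"
  if "group G" "comm_group Q" "f \<in> hom G Q" "a \<in> formal_exprs G" "g \<in> carrier G" "h \<in> carrier G"
  using that(4)
proof (induction a)
  case Nil
  interpret Q: comm_group Q by fact
  show ?case using that
    by (simp add: expr_act_def hom_one)
next
  case (Cons q a)
  interpret G: group G by fact
  interpret Q: comm_group Q by fact
  obtain n \<phi> where q: "q = (n, \<phi>)" by (cases q)
  have phi: "\<phi> \<in> hom G G" using Cons.prems q by (auto simp: formal_exprs_def)
  have a: "a \<in> formal_exprs G" using Cons.prems by (auto simp: formal_exprs_def)
  have fc: "f \<circ> \<phi> \<in> hom G Q" using phi that(3) by (simp add: hom_compose)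
  have pc: "\<And>x. x \<in> carrier G \<Longrightarrow> \<phi> x \<in> carrier G"
    using phi by (auto simp: hom_def)
  have fcG: "\<And>x. x \<in> carrier G \<Longrightarrow> f x \<in> carrier Q"
    using that(3) by (auto simp: hom_def)
  have ec: "\<And>x. x \<in> carrier G \<Longrightarrow> expr_act G a x \<in> carrier G"
    using expr_act_carrier[OF that(1) a] by blast
  have fm: "\<And>x y. x \<in> carrier G \<Longrightarrow> y \<in> carrier G \<Longrightarrow> f (x \<otimes>\<^bsub>G\<^esub> y) = f x \<otimes>\<^bsub>Q\<^esub> f y"
    using that(3) by (simp add: hom_mult)
  have gh: "g \<otimes>\<^bsub>G\<^esub> h \<in> carrier G" using that(5,6) by simp
  have e1: "f (\<phi> ((g \<otimes>\<^bsub>G\<^esub> h) [^]\<^bsub>G\<^esub> n)) = f (\<phi> (g [^]\<^bsub>G\<^esub> n)) \<otimes>\<^bsub>Q\<^esub> f (\<phi> (h [^]\<^bsub>G\<^esub> n))"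
  proof -
    have "\<And>x. x \<in> carrier G \<Longrightarrow> f (\<phi> (x [^]\<^bsub>G\<^esub> n)) = (f (\<phi> x)) [^]\<^bsub>Q\<^esub> n"
      using hom_int_pow[OF fc _ G.is_group Q.is_group] by simp
    moreover have "f (\<phi> (g \<otimes>\<^bsub>G\<^esub> h)) = f (\<phi> g) \<otimes>\<^bsub>Q\<^esub> f (\<phi> h)"
      using hom_mult[OF phi that(5,6)] fm pc that(5,6) by simp
    ultimately show ?thesis using gh that(5,6) pc fcG Q.int_pow_distrib by simp
  qed
  have fe: "\<And>x. x \<in> carrier G \<Longrightarrow> f (expr_act G a x) \<in> carrier Q"
    using ec fcG by blast
  have fp: "\<And>x. x \<in> carrier G \<Longrightarrow> f (\<phi> (x [^]\<^bsub>G\<^esub> n)) \<in> carrier Q"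
    using fcG pc by simp
  have "f (expr_act G (q # a) (g \<otimes>\<^bsub>G\<^esub> h)) =
      f (\<phi> ((g \<otimes>\<^bsub>G\<^esub> h) [^]\<^bsub>G\<^esub> n)) \<otimes>\<^bsub>Q\<^esub> f (expr_act G a (g \<otimes>\<^bsub>G\<^esub> h))"
    using q fm pc ec gh by simp
  also have "\<dots> = (f (\<phi> (g [^]\<^bsub>G\<^esub> n)) \<otimes>\<^bsub>Q\<^esub> f (\<phi> (h [^]\<^bsub>G\<^esub> n))) \<otimes>\<^bsub>Q\<^esub>
      (f (expr_act G a g) \<otimes>\<^bsub>Q\<^esub> f (expr_act G a h))"
    using e1 Cons.IH a by simp
  also have "\<dots> = (f (\<phi> (g [^]\<^bsub>G\<^esub> n)) \<otimes>\<^bsub>Q\<^esub> f (expr_act G a g)) \<otimes>\<^bsub>Q\<^esub>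
      (f (\<phi> (h [^]\<^bsub>G\<^esub> n)) \<otimes>\<^bsub>Q\<^esub> f (expr_act G a h))"
    using fe[OF that(5)] fe[OF that(6)] fp[OF that(5)] fp[OF that(6)]
    by (simp add: Q.m_ac)
  also have "\<dots> = f (expr_act G (q # a) g) \<otimes>\<^bsub>Q\<^esub> f (expr_act G (q # a) h)"
    using q fm pc ec that(5,6) by simp
  finally show ?case .
qed

theorem lemma3p1:
  fixes G :: "('a, 'b) monoid_scheme" and \<psi> :: "'a \<Rightarrow> 'a"
    and \<alpha> \<beta> :: "(int \<times> ('a \<Rightarrow> 'a)) list"
  assumes "group G" and "\<not> comm_group G"
    and "\<psi> \<in> hom G G"
    and "\<psi> ` derived G (carrier G) \<subseteq> group_center G"
    and "\<alpha> \<in> formal_exprs G" and "\<beta> \<in> formal_exprs G"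
  shows "\<psi> (expr_act G \<alpha> \<one>\<^bsub>G\<^esub>) = \<one>\<^bsub>G\<^esub>
    \<and> (\<forall>g \<in> carrier G.
           cong_center G (\<psi> (expr_act G (\<alpha> @ \<beta>) g)) (\<psi> (expr_act G (\<beta> @ \<alpha>) g)))
    \<and> (\<forall>g \<in> carrier G. \<forall>h \<in> carrier G.
           cong_center G (\<psi> (expr_act G \<alpha> (g \<otimes>\<^bsub>G\<^esub> h)))
             (\<psi> (expr_act G \<alpha> g) \<otimes>\<^bsub>G\<^esub> \<psi> (expr_act G \<alpha> h)))
    \<and> (\<forall>g \<in> carrier G.
           cong_center G (inv\<^bsub>G\<^esub> (\<psi> (expr_act G \<alpha> g))) (\<psi> (expr_act G \<alpha> (inv\<^bsub>G\<^esub> g))))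
    \<and> (\<forall>g \<in> carrier G. \<forall>h \<in> carrier G.
           cong_center G (\<psi> (expr_act G \<alpha> (g \<otimes>\<^bsub>G\<^esub> h)) \<otimes>\<^bsub>G\<^esub> inv\<^bsub>G\<^esub> (\<psi> (expr_act G \<alpha> g)))
             (\<psi> (expr_act G \<alpha> h)))"
proof -
  interpret G: group G by fact
  define N where "N = derived G (carrier G)"
  interpret N: normal N G unfolding N_def by (rule G.derived_self_is_normal)
  define Q where "Q = G Mod N"
  interpret Q: comm_group Q unfolding Q_def N_def by (rule G.derived_quot_is_comm_group)
  define P where "P = (\<lambda>x. N #>\<^bsub>G\<^esub> x)"
  have Ph: "P \<in> hom G Q" unfolding P_def Q_def by (rule N.r_coset_hom_Mod)
  have Pc: "\<And>x. x \<in> carrier G \<Longrightarrow> P x \<in> carrier Q" using Ph by (auto simp: hom_def)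
  have Pm: "\<And>x y. x \<in> carrier G \<Longrightarrow> y \<in> carrier G \<Longrightarrow> P (x \<otimes>\<^bsub>G\<^esub> y) = P x \<otimes>\<^bsub>Q\<^esub> P y"
    using Ph by (simp add: hom_mult)
  have P1: "P \<one>\<^bsub>G\<^esub> = \<one>\<^bsub>Q\<^esub>" using Ph G.is_group Q.is_group
    by (simp add: hom_one)
  interpret psi: group_hom G G \<psi> using assms(3) by (simp add: group_hom_def group_hom_axioms_def G.is_group)
  have key: "cong_center G (\<psi> x) (\<psi> y)"
    if xy: "x \<in> carrier G" "y \<in> carrier G" "P x = P y" for x y
  proof -
    have "x \<in> N #>\<^bsub>G\<^esub> y" using G.rcos_self[OF xy(1) N.subgroup_axioms] xy(3) by (simp add: P_def)
    then obtain c where c: "c \<in> N" "x = c \<otimes>\<^bsub>G\<^esub> y" unfolding r_coset_def by blast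
    have cc: "c \<in> carrier G" using c(1) N.subset by blast
    have z: "\<psi> c \<in> group_center G" using assms(4) c(1) N_def by blast
    have "\<psi> x = \<psi> c \<otimes>\<^bsub>G\<^esub> \<psi> y" using c cc xy by simp
    also have "\<dots> = \<psi> y \<otimes>\<^bsub>G\<^esub> \<psi> c" using z xy(2) by (simp add: group_center_def)
    finally show ?thesis using z unfolding cong_center_def by blast
  qed
  have ea: "\<And>g. g \<in> carrier G \<Longrightarrow> expr_act G \<alpha> g \<in> carrier G"
    using expr_act_carrier[OF assms(1,5)] by blast
  have eb: "\<And>g. g \<in> carrier G \<Longrightarrow> expr_act G \<beta> g \<in> carrier G"
    using expr_act_carrier[OF assms(1,6)] by blast
  have hom: "\<And>g h. g \<in> carrier G \<Longrightarrow> h \<in> carrier G \<Longrightarrow>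
      P (expr_act G \<alpha> (g \<otimes>\<^bsub>G\<^esub> h)) = P (expr_act G \<alpha> g) \<otimes>\<^bsub>Q\<^esub> P (expr_act G \<alpha> h)"
    using expr_act_hom[OF assms(1) Q.comm_group_axioms Ph assms(5)] by blast
  have one: "expr_act G \<alpha> \<one>\<^bsub>G\<^esub> = \<one>\<^bsub>G\<^esub>" using expr_act_one[OF assms(1,5)] .
  have p1: "\<psi> (expr_act G \<alpha> \<one>\<^bsub>G\<^esub>) = \<one>\<^bsub>G\<^esub>" using one by simp
  have p2: "cong_center G (\<psi> (expr_act G (\<alpha> @ \<beta>) g)) (\<psi> (expr_act G (\<beta> @ \<alpha>) g))"
    if g: "g \<in> carrier G" for g
  proof (rule key)
    show "P (expr_act G (\<alpha> @ \<beta>) g) = P (expr_act G (\<beta> @ \<alpha>) g)"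
      using expr_act_append[OF assms(1,5,6) g] expr_act_append[OF assms(1,6,5) g]
        Pm ea eb Pc g Q.m_comm by simp
  qed (use g ea eb expr_act_append[OF assms(1,5,6) g] expr_act_append[OF assms(1,6,5) g] in auto)
  have p3: "cong_center G (\<psi> (expr_act G \<alpha> (g \<otimes>\<^bsub>G\<^esub> h)))
             (\<psi> (expr_act G \<alpha> g) \<otimes>\<^bsub>G\<^esub> \<psi> (expr_act G \<alpha> h))"
    if g: "g \<in> carrier G" and h: "h \<in> carrier G" for g h
  proof -
    have "cong_center G (\<psi> (expr_act G \<alpha> (g \<otimes>\<^bsub>G\<^esub> h)))
             (\<psi> (expr_act G \<alpha> g \<otimes>\<^bsub>G\<^esub> expr_act G \<alpha> h))"
      by (rule key) (use g h ea hom Pm in auto)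
    then show ?thesis using g h ea by simp
  qed
  have inv: "P (expr_act G \<alpha> (inv\<^bsub>G\<^esub> g)) = P (inv\<^bsub>G\<^esub> (expr_act G \<alpha> g))"
    if g: "g \<in> carrier G" for g
  proof -
    have "P (expr_act G \<alpha> g) \<otimes>\<^bsub>Q\<^esub> P (expr_act G \<alpha> (inv\<^bsub>G\<^esub> g)) = \<one>\<^bsub>Q\<^esub>"
      using hom[OF g G.inv_closed[OF g]] g one P1 by simp
    also have "\<dots> = P (expr_act G \<alpha> g) \<otimes>\<^bsub>Q\<^esub> P (inv\<^bsub>G\<^esub> (expr_act G \<alpha> g))"
      using Pm[OF ea[OF g] G.inv_closed[OF ea[OF g]]] g ea P1 by simp
    finally show ?thesis
      using Q.l_cancel Pc ea g G.inv_closed by metis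
  qed
  have p4: "cong_center G (inv\<^bsub>G\<^esub> (\<psi> (expr_act G \<alpha> g))) (\<psi> (expr_act G \<alpha> (inv\<^bsub>G\<^esub> g)))"
    if g: "g \<in> carrier G" for g
  proof -
    have "cong_center G (\<psi> (inv\<^bsub>G\<^esub> (expr_act G \<alpha> g))) (\<psi> (expr_act G \<alpha> (inv\<^bsub>G\<^esub> g)))"
      by (rule key) (use g ea inv in auto)
    then show ?thesis using g ea by simp
  qed
  have p5: "cong_center G (\<psi> (expr_act G \<alpha> (g \<otimes>\<^bsub>G\<^esub> h)) \<otimes>\<^bsub>G\<^esub> inv\<^bsub>G\<^esub> (\<psi> (expr_act G \<alpha> g)))
             (\<psi> (expr_act G \<alpha> h))"
    if g: "g \<in> carrier G" and h: "h \<in> carrier G" for g h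
  proof -
    let ?A = "expr_act G \<alpha> g" and ?B = "expr_act G \<alpha> h"
    have A: "?A \<in> carrier G" and B: "?B \<in> carrier G" using ea g h by auto
    have "P (expr_act G \<alpha> (g \<otimes>\<^bsub>G\<^esub> h) \<otimes>\<^bsub>G\<^esub> inv\<^bsub>G\<^esub> ?A)
        = (P ?A \<otimes>\<^bsub>Q\<^esub> P ?B) \<otimes>\<^bsub>Q\<^esub> P (inv\<^bsub>G\<^esub> ?A)"
      using Pm hom g h ea A by simp
    also have "\<dots> = P ?B \<otimes>\<^bsub>Q\<^esub> (P ?A \<otimes>\<^bsub>Q\<^esub> P (inv\<^bsub>G\<^esub> ?A))"
      using Pc A B by (simp add: Q.m_ac)
    also have "P ?A \<otimes>\<^bsub>Q\<^esub> P (inv\<^bsub>G\<^esub> ?A) = \<one>\<^bsub>Q\<^esub>"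
      using Pm[OF A G.inv_closed[OF A]] A P1 by simp
    finally have "P (expr_act G \<alpha> (g \<otimes>\<^bsub>G\<^esub> h) \<otimes>\<^bsub>G\<^esub> inv\<^bsub>G\<^esub> ?A) = P ?B"
      using Pc B by simp
    then have "cong_center G (\<psi> (expr_act G \<alpha> (g \<otimes>\<^bsub>G\<^esub> h) \<otimes>\<^bsub>G\<^esub> inv\<^bsub>G\<^esub> ?A)) (\<psi> ?B)"
      by (intro key) (use g h ea in auto)
    then show ?thesis using g h ea by simp
  qed
  show ?thesis using p1 p2 p3 p4 p5 by blast
qed

end
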